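(* Let $E$ be a finite graph, i.e. a metric continuum that is the union of finitely many arcs $E_1,\dots,E_r$ ($r\ge1$), any two of which are either disjoint or intersect only in one or both of their end points. Then there exists an onto map $F:E\to E$ that is topologically transitive (indeed has a dense orbit) and has a dense set of periodic points; $F$ is chaotic on $E$.
   Context: A map $g$ on a metric space $(Z,d)$ is chaotic (Devaney) if it is onto, topologically transitive (for nonempty open $U,V$ there is $n>0$ with $g^n(U)\cap V\neq\emptyset$), has a dense set of periodic points, and is sensitive to initial conditions (there is $\eta>0$ such that for every $x$ and every neighbourhood $N$ of $x$ there are $y\in N$ and $n\ge0$ with $d(g^n(x),g^n(y))>\eta$). An arc is a space homeomorphic to $[0,1]$; its end points are the images of $0$ and $1$. *)

theory Defs
  imports "HOL-Analysis.Analysis"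
begin

definition finite_graph :: "'a::metric_space set \<Rightarrow> bool" where
  "finite_graph E \<longleftrightarrow> E \<noteq> {} \<and> compact E \<and> connected E \<and>
     (\<exists>r::nat. \<exists>g :: nat \<Rightarrow> real \<Rightarrow> 'a. r \<ge> 1 \<and> (\<forall>i<r. arc (g i)) \<and>
        E = (\<Union>i<r. path_image (g i)) \<and>
        (\<forall>i<r. \<forall>j<r. i \<noteq> j \<longrightarrow>
            path_image (g i) \<inter> path_image (g j)
              \<subseteq> {pathstart (g i), pathfinish (g i)} \<inter> {pathstart (g j), pathfinish (g j)}))"

definition topologically_transitive_on :: "'a::metric_space set \<Rightarrow> ('a \<Rightarrow> 'a) \<Rightarrow> bool" where
  "topologically_transitive_on E g \<longleftrightarrow>
     (\<forall>U V. openin (top_of_set E) U \<and> openin (top_of_set E) V \<and> U \<noteq> {} \<and> V \<noteq> {} \<longrightarrow>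
        (\<exists>n>0. (g ^^ n) ` U \<inter> V \<noteq> {}))"

definition periodic_points_dense_on :: "'a::metric_space set \<Rightarrow> ('a \<Rightarrow> 'a) \<Rightarrow> bool" where
  "periodic_points_dense_on E g \<longleftrightarrow> E \<subseteq> closure {x \<in> E. \<exists>n>0. (g ^^ n) x = x}"

definition sensitive_on :: "'a::metric_space set \<Rightarrow> ('a \<Rightarrow> 'a) \<Rightarrow> bool" where
  "sensitive_on E g \<longleftrightarrow> (\<exists>\<eta>>0. \<forall>x\<in>E. \<forall>N. N \<subseteq> E \<and> x \<in> N \<and>
       (\<exists>U. openin (top_of_set E) U \<and> x \<in> U \<and> U \<subseteq> N) \<longrightarrow>
       (\<exists>y\<in>N. \<exists>n. dist ((g ^^ n) x) ((g ^^ n) y) > \<eta>))"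

definition chaotic_on :: "'a::metric_space set \<Rightarrow> ('a \<Rightarrow> 'a) \<Rightarrow> bool" where
  "chaotic_on E g \<longleftrightarrow> g ` E = E \<and> topologically_transitive_on E g \<and>
     periodic_points_dense_on E g \<and> sensitive_on E g"

definition has_dense_orbit_on :: "'a::metric_space set \<Rightarrow> ('a \<Rightarrow> 'a) \<Rightarrow> bool" where
  "has_dense_orbit_on E g \<longleftrightarrow> (\<exists>x\<in>E. E \<subseteq> closure (range (\<lambda>n. (g ^^ n) x)))"

end

theory Submission imports Defs begin

definition stp :: "(nat \<Rightarrow> real \<Rightarrow> 'a) \<Rightarrow> nat \<times> bool \<Rightarrow> real \<Rightarrow> 'a" where
  "stp g s u = g (fst s) (if snd s then u else 1 - u)"

fun walk :: "(nat \<Rightarrow> real \<Rightarrow> 'a) \<Rightarrow> nat \<Rightarrow> 'a \<Rightarrow> (nat \<times> bool) list \<Rightarrow> 'a \<Rightarrow> bool" where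
  "walk g r x [] y = (x = y)"
| "walk g r x (s # ws) y = (fst s < r \<and> stp g s 0 = x \<and> walk g r (stp g s 1) ws y)"

lemma walk_append: "walk g r x ws1 y \<Longrightarrow> walk g r y ws2 z \<Longrightarrow> walk g r x (ws1 @ ws2) z"
  by (induction ws1 arbitrary: x) auto

definition flp :: "nat \<times> bool \<Rightarrow> nat \<times> bool" where "flp s = (fst s, \<not> snd s)"

lemma stp_flp: "stp g (flp s) u = stp g s (1 - u)"
  by (auto simp: stp_def flp_def)

lemma walk_rev: "walk g r x ws y \<Longrightarrow> walk g r y (rev (map flp ws)) x"
proof (induction ws arbitrary: x)
  case Nil then show ?case by simp
next
  case (Cons s ws)
  then have "walk g r y (rev (map flp ws)) (stp g s 1)" by auto
  moreover have "walk g r (stp g s 1) [flp s] x" using Cons.prems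
    by (auto simp: stp_def flp_def)
  ultimately show ?case using walk_append by fastforce
qed

lemma walk_concat: "(\<And>w. w \<in> set ws \<Longrightarrow> walk g r x w x) \<Longrightarrow> walk g r x (concat ws) x"
  by (induction ws) (auto intro: walk_append)

lemma walk_nth: "walk g r x ws y \<Longrightarrow> Suc k < length ws \<Longrightarrow> stp g (ws ! k) 1 = stp g (ws ! Suc k) 0"
proof (induction ws arbitrary: x k)
  case Nil then show ?case by simp
next
  case (Cons s ws)
  show ?case
  proof (cases k)
    case 0 then show ?thesis using Cons by (cases ws) auto
  next
    case (Suc k') then show ?thesis using Cons by auto
  qed
qed

lemma walk_hd: "walk g r x ws y \<Longrightarrow> ws \<noteq> [] \<Longrightarrow> stp g (ws ! 0) 0 = x"
  by (cases ws) auto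

lemma walk_last: "walk g r x ws y \<Longrightarrow> ws \<noteq> [] \<Longrightarrow> stp g (ws ! (length ws - 1)) 1 = y"
proof (induction ws arbitrary: x)
  case Nil then show ?case by simp
next
  case (Cons s ws) then show ?case by (cases ws) auto
qed

lemma walk_fst: "walk g r x ws y \<Longrightarrow> s \<in> set ws \<Longrightarrow> fst s < r"
  by (induction ws arbitrary: x) auto

locale fg =
  fixes E :: "'a::metric_space set" and r :: nat and g :: "nat \<Rightarrow> real \<Rightarrow> 'a"
  assumes r1: "r \<ge> 1" and arcs: "\<And>i. i < r \<Longrightarrow> arc (g i)"
    and Eeq: "E = (\<Union>i<r. path_image (g i))"
    and inter: "\<And>i j. i < r \<Longrightarrow> j < r \<Longrightarrow> i \<noteq> j \<Longrightarrow>
            path_image (g i) \<inter> path_image (g j)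
              \<subseteq> {pathstart (g i), pathfinish (g i)} \<inter> {pathstart (g j), pathfinish (g j)}"
    and conn: "connected E"
begin

definition "reach x y \<longleftrightarrow> (\<exists>ws. walk g r x ws y)"

lemma reach_trans: "reach x y \<Longrightarrow> reach y z \<Longrightarrow> reach x z"
  unfolding reach_def by (blast intro: walk_append)

lemma reach_edge: "i < r \<Longrightarrow> reach (g i 0) (g i 1)" "i < r \<Longrightarrow> reach (g i 1) (g i 0)"
proof -
  assume i: "i < r"
  have "walk g r (g i 0) [(i, True)] (g i 1)" using i by (simp add: stp_def)
  then show "reach (g i 0) (g i 1)" unfolding reach_def by blast
  have "walk g r (g i 1) [(i, False)] (g i 0)" using i by (simp add: stp_def)
  then show "reach (g i 1) (g i 0)" unfolding reach_def by blast
qed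

lemma all_reach: "i < r \<Longrightarrow> reach (g 0 0) (g i 0)"
proof (rule ccontr)
  assume i: "i < r" and nr: "\<not> reach (g 0 0) (g i 0)"
  define A where "A = {j. j < r \<and> reach (g 0 0) (g j 0)}"
  define S1 where "S1 = (\<Union>j\<in>A. path_image (g j))"
  define S2 where "S2 = (\<Union>j\<in>{..<r} - A. path_image (g j))"
  have cpi: "\<And>j. j < r \<Longrightarrow> closed (path_image (g j))"
    using arcs by (simp add: arc_imp_path closed_path_image)
  have cl1: "closed S1" unfolding S1_def A_def by (rule closed_Union) (auto intro: cpi)
  have cl2: "closed S2" unfolding S2_def by (rule closed_Union) (auto intro: cpi)
  have cov: "E \<subseteq> S1 \<union> S2" unfolding Eeq S1_def S2_def A_def by auto
  have r0: "reach (g 0 0) (g 0 0)" unfolding reach_def by (rule exI[of _ "[]"]) simp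
  have "0 \<in> A" using r1 r0 unfolding A_def by auto
  moreover have "g 0 0 \<in> path_image (g 0)" unfolding path_image_def by auto
  ultimately have ne1: "S1 \<inter> E \<noteq> {}" unfolding S1_def Eeq using r1 by force
  have "i \<in> {..<r} - A" using i nr A_def by auto
  moreover have "g i 0 \<in> path_image (g i)" unfolding path_image_def by auto
  ultimately have ne2: "S2 \<inter> E \<noteq> {}" unfolding S2_def Eeq using i by force
  have disj: "S1 \<inter> S2 \<inter> E = {}"
  proof (rule ccontr)
    assume "S1 \<inter> S2 \<inter> E \<noteq> {}"
    then obtain x j k where j: "j \<in> A" and k: "k < r" "k \<notin> A" and
      xj: "x \<in> path_image (g j)" and xk: "x \<in> path_image (g k)"
      unfolding S1_def S2_def by auto
    have jr: "j < r" and rj: "reach (g 0 0) (g j 0)" using j A_def by auto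
    have "j \<noteq> k" using j k by auto
    then have x: "x \<in> {g j 0, g j 1}" "x \<in> {g k 0, g k 1}"
      using inter[OF jr k(1)] xj xk by (auto simp: pathstart_def pathfinish_def)
    have "reach (g 0 0) x" using x(1) rj reach_trans[OF rj reach_edge(1)[OF jr]] by auto
    then have "reach (g 0 0) (g k 0)" using x(2) reach_trans[OF _ reach_edge(2)[OF k(1)]] by auto
    then show False using k A_def by auto
  qed
  show False using conn cl1 cl2 cov disj ne1 ne2 unfolding connected_closed by blast
qed

lemma exists_walk:
  obtains L where "walk g r (g 0 0) L (g 0 0)" "L \<noteq> []" "\<And>j. j < r \<Longrightarrow> (j, True) \<in> set L"
proof -
  have "\<forall>i. \<exists>ws. i < r \<longrightarrow> walk g r (g 0 0) ws (g i 0)"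
    using all_reach unfolding reach_def by blast
  then obtain W where W: "\<And>i. i < r \<Longrightarrow> walk g r (g 0 0) (W i) (g i 0)" by metis
  define cw where "cw i = W i @ [(i, True), (i, False)] @ rev (map flp (W i))" for i
  have cwc: "walk g r (g 0 0) (cw i) (g 0 0)" if i: "i < r" for i
  proof -
    have w2: "walk g r (g i 0) [(i, True), (i, False)] (g i 0)" using i by (simp add: stp_def)
    show ?thesis unfolding cw_def
      using walk_append[OF W[OF i] walk_append[OF w2 walk_rev[OF W[OF i]]]] by simp
  qed
  define L where "L = concat (map cw [0..<r])"
  have "walk g r (g 0 0) L (g 0 0)" unfolding L_def by (rule walk_concat) (auto intro: cwc)
  moreover have "\<And>j. j < r \<Longrightarrow> (j, True) \<in> set L" unfolding L_def cw_def by force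
  moreover then have "L \<noteq> []" using r1 by force
  ultimately show ?thesis using that by blast
qed

end

locale fgw = fg +
  fixes L :: "(nat \<times> bool) list"
  assumes wL: "walk g r (g 0 0) L (g 0 0)" and Lne: "L \<noteq> []"
    and Lall: "\<And>j. j < r \<Longrightarrow> (j, True) \<in> set L"
begin

definition "m = length L"
definition "M = 2 * m"

definition Phi :: "real \<Rightarrow> 'a" where
  "Phi t = (let p = min (nat \<lfloor>real M * t\<rfloor>) (M - 1) in stp g (L ! (p mod m)) (real M * t - real p))"

definition F :: "'a \<Rightarrow> 'a" where
  "F x = (let it = (SOME it. fst it < r \<and> snd it \<in> {0..1} \<and> g (fst it) (snd it) = x) in Phi (snd it))"

lemma m1: "m \<ge> 1" using Lne by (simp add: m_def Suc_le_eq)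
lemma M2: "M \<ge> 2" using m1 by (simp add: M_def)

lemma Lk: "fst (L ! k) < r" if "k < m"
  using walk_fst[OF wL, of "L ! k"] that by (simp add: m_def)

lemma Lmod: "fst (L ! (p mod m)) < r"
  using Lk m1 by simp

lemma markov:
  assumes p: "p < M" and u: "u \<in> {0..1}"
  shows "Phi ((real p + u) / real M) = stp g (L ! (p mod m)) u"
proof -
  have Mpos: "real M > 0" using M2 by simp
  have eq: "real M * ((real p + u) / real M) = real p + u" using Mpos by simp
  show ?thesis
  proof (cases "u < 1")
    case True
    then have "\<lfloor>real p + u\<rfloor> = int p" using u by (simp add: floor_eq_iff)
    then show ?thesis using p unfolding Phi_def eq by simp
  next
    case False
    then have u1: "u = 1" using u by simp
    have fl: "\<lfloor>real p + u\<rfloor> = int p + 1" using u1 by simp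
    show ?thesis
    proof (cases "p + 1 < M")
      case True
      then have "min (nat \<lfloor>real p + u\<rfloor>) (M - 1) = p + 1" using fl by simp
      then have "Phi ((real p + u) / real M) = stp g (L ! (Suc p mod m)) 0"
        unfolding Phi_def eq using u1 by simp
      also have "\<dots> = stp g (L ! (p mod m)) 1"
      proof (cases "Suc (p mod m) < m")
        case True
        then have "Suc p mod m = Suc (p mod m)" by (simp add: mod_Suc)
        then show ?thesis using walk_nth[OF wL, of "p mod m"] True by (simp add: m_def)
      next
        case False
        then have a: "p mod m = m - 1" using m1
          by (metis Suc_pred' less_Suc_eq mod_less_divisor not_less_eq zero_less_one less_le_trans)
        then have "Suc p mod m = 0" using m1 by (metis Suc_pred' less_le_trans mod_Suc zero_less_one)
        then show ?thesis using walk_hd[OF wL Lne] walk_last[OF wL Lne] a by (simp add: m_def)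
      qed
      finally show ?thesis using u1 by simp
    next
      case False
      then have "p = M - 1" using p by simp
      then have "min (nat \<lfloor>real p + u\<rfloor>) (M - 1) = p" using fl by simp
      then show ?thesis unfolding Phi_def eq using u1 by simp
    qed
  qed
qed

lemma decomp:
  assumes t: "t \<in> {0..1::real}"
  obtains p u where "p < M" "u \<in> {0..1}" "t = (real p + u) / real M"
proof -
  define p where "p = min (nat \<lfloor>real M * t\<rfloor>) (M - 1)"
  have Mpos: "real M > 0" using M2 by simp
  have p: "p < M" using M2 unfolding p_def by simp
  have Mt: "0 \<le> real M * t" using t by simp
  have "real p \<le> real M * t \<and> real M * t \<le> real p + 1"
  proof (cases "nat \<lfloor>real M * t\<rfloor> \<le> M - 1")
    case True
    then have "p = nat \<lfloor>real M * t\<rfloor>" unfolding p_def by simp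
    moreover have "real (nat \<lfloor>real M * t\<rfloor>) = of_int \<lfloor>real M * t\<rfloor>" using Mt by simp
    moreover have "of_int \<lfloor>real M * t\<rfloor> \<le> real M * t" "real M * t < of_int \<lfloor>real M * t\<rfloor> + 1"
      by (simp_all add: of_int_floor_le real_of_int_floor_add_one_gt)
    ultimately show ?thesis by simp
  next
    case False
    then have pe: "p = M - 1" unfolding p_def by simp
    then have e: "real p + 1 = real M" using M2 by simp
    have "real (nat \<lfloor>real M * t\<rfloor>) \<le> real M * t" using Mt by simp
    moreover have "real p \<le> real (nat \<lfloor>real M * t\<rfloor>)" using False pe by simp
    moreover have "of_int \<lfloor>real M * t\<rfloor> \<le> real M * t" by (rule of_int_floor_le)
    moreover have "real M * t \<le> real M" using t Mpos by (simp add: mult_left_le)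
    ultimately show ?thesis using e by linarith
  qed
  then have "real M * t - real p \<in> {0..1}" by simp
  moreover have "t = (real p + (real M * t - real p)) / real M" using Mpos by simp
  ultimately show ?thesis using that p by blast
qed

lemma stp_in: "fst s < r \<Longrightarrow> u \<in> {0..1} \<Longrightarrow> stp g s u \<in> E"
  unfolding stp_def Eeq path_image_def by (auto intro!: bexI[of _ "fst s"])

lemma Phi_in: "t \<in> {0..1} \<Longrightarrow> Phi t \<in> E"
  by (metis decomp markov stp_in Lmod)

lemma Phi0: "Phi 0 = g 0 0"
  using markov[of 0 0] M2 walk_hd[OF wL Lne] by simp

lemma Phi1: "Phi 1 = g 0 0"
proof -
  have Mpos: "real M > 0" using M2 by simp
  have "(real (M - 1) + 1) / real M = 1" using M2 Mpos by (simp add: of_nat_diff)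
  moreover have "(M - 1) mod m = m - 1"
  proof -
    have "M - 1 = (m - 1) + 1 * m" unfolding M_def using m1 by simp
    then show ?thesis using m1 by (metis mod_mult_self1 diff_less less_numeral_extra(1) mod_less less_le_trans)
  qed
  ultimately show ?thesis using markov[of "M - 1" 1] M2 walk_last[OF wL Lne] by (simp add: m_def)
qed

lemma g_inj: "i < r \<Longrightarrow> s \<in> {0..1} \<Longrightarrow> t \<in> {0..1} \<Longrightarrow> g i s = g i t \<Longrightarrow> s = t"
  using arcs[of i] unfolding arc_def inj_on_def by blast

lemma F_g: assumes i: "i < r" and t: "t \<in> {0..1}" shows "F (g i t) = Phi t"
proof -
  have ex: "\<exists>it. fst it < r \<and> snd it \<in> {0..1} \<and> g (fst it) (snd it) = g i t"
    using i t by (intro exI[of _ "(i, t)"]) simp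
  define it where "it = (SOME it. fst it < r \<and> snd it \<in> {0..1} \<and> g (fst it) (snd it) = g i t)"
  have it: "fst it < r" "snd it \<in> {0..1}" "g (fst it) (snd it) = g i t"
    using someI_ex[OF ex] unfolding it_def by auto
  have "Phi (snd it) = Phi t"
  proof (cases "fst it = i")
    case True
    then show ?thesis using g_inj[OF i it(2) t] it by simp
  next
    case False
    have "g i t \<in> path_image (g (fst it)) \<inter> path_image (g i)"
      using it t unfolding path_image_def by (metis IntI image_eqI)
    then have "g i t \<in> {g i 0, g i 1}" "g i t \<in> {g (fst it) 0, g (fst it) 1}"
      using inter[OF it(1) i False] by (auto simp: pathstart_def pathfinish_def)
    then have "t \<in> {0,1}" "snd it \<in> {0, 1}"
      using g_inj[OF i t] g_inj[OF it(1) it(2)] it(3) by auto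
    then show ?thesis using Phi0 Phi1 by auto
  qed
  then show ?thesis unfolding F_def it_def[symmetric] by simp
qed

lemma cont_stp: "fst s < r \<Longrightarrow> continuous_on {0..1} (stp g s)"
proof -
  assume s: "fst s < r"
  have cg: "continuous_on {0..1} (g (fst s))" using arc_imp_path[OF arcs[OF s]] unfolding path_def .
  show ?thesis
  proof (cases "snd s")
    case True then show ?thesis using cg unfolding stp_def by simp
  next
    case False
    have "continuous_on {0..1} (g (fst s) \<circ> (\<lambda>u. 1 - u))"
      by (rule continuous_on_compose) (auto intro!: continuous_intros continuous_on_subset[OF cg])
    then show ?thesis using False unfolding stp_def o_def by simp
  qed
qed

lemma cont_Phi: "continuous_on {0..1} Phi"
proof -
  have Mpos: "real M > 0" using M2 by simp
  define U where "U p = {real p / real M .. (real p + 1) / real M}" for p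
  have un: "{0..1} = (\<Union>p\<in>{..<M}. U p)"
  proof
    show "{0..1} \<subseteq> (\<Union>p\<in>{..<M}. U p)"
    proof
      fix t :: real assume "t \<in> {0..1}"
      then obtain p u where "p < M" "u \<in> {0..1}" "t = (real p + u) / real M" by (rule decomp)
      then show "t \<in> (\<Union>p\<in>{..<M}. U p)" unfolding U_def using Mpos
        by (auto intro!: bexI[of _ p] divide_right_mono)
    qed
    show "(\<Union>p\<in>{..<M}. U p) \<subseteq> {0..1}"
    proof
      fix t assume "t \<in> (\<Union>p\<in>{..<M}. U p)"
      then obtain p where p: "p < M" "t \<in> U p" by auto
      then have pp: "real p / real M \<le> t" "t \<le> (real p + 1) / real M" unfolding U_def by auto
      have "real p + 1 \<le> real M" using p(1) by simp
      then have "(real p + 1) / real M \<le> 1" using Mpos by simp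
      moreover have "0 \<le> t" by (rule order_trans[OF _ pp(1)]) simp
      ultimately show "t \<in> {0..1}" using pp by simp
    qed
  qed
  have "continuous_on (U p) Phi" if p: "p < M" for p
  proof -
    have eq: "Phi t = stp g (L ! (p mod m)) (real M * t - real p)" if t: "t \<in> U p" for t
    proof -
      have "real M * t - real p \<in> {0..1}" using t Mpos unfolding U_def
        by (auto simp: field_simps)
      then have "Phi ((real p + (real M * t - real p)) / real M) = stp g (L ! (p mod m)) (real M * t - real p)"
        using markov p by blast
      moreover have "(real p + (real M * t - real p)) / real M = t" using Mpos by simp
      ultimately show ?thesis by simp
    qed
    have "continuous_on (U p) (stp g (L ! (p mod m)) \<circ> (\<lambda>t. real M * t - real p))"
      apply (rule continuous_on_compose)
       apply (auto intro!: continuous_intros)[1]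
      apply (rule continuous_on_subset[OF cont_stp[OF Lmod]])
      using Mpos unfolding U_def by (auto simp: field_simps)
    then show ?thesis using eq by (auto intro: continuous_on_cong[THEN iffD1, rotated])
  qed
  then show ?thesis unfolding un
    by (intro continuous_on_closed_Union) (auto simp: U_def)
qed

lemma cont_F: "continuous_on E F"
proof -
  have "continuous_on (path_image (g i)) F" if i: "i < r" for i
  proof -
    obtain h where h: "homeomorphism {0..1} (path_image (g i)) (g i) h"
      using homeomorphism_arc[OF arcs[OF i]] by blast
    have hc: "continuous_on (path_image (g i)) h" and hi: "h ` path_image (g i) \<subseteq> {0..1}"
      and gh: "\<And>x. x \<in> path_image (g i) \<Longrightarrow> g i (h x) = x"
      using h unfolding homeomorphism_def by auto
    have "continuous_on (path_image (g i)) (Phi \<circ> h)"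
      by (rule continuous_on_compose[OF hc continuous_on_subset[OF cont_Phi hi]])
    moreover have "\<And>x. x \<in> path_image (g i) \<Longrightarrow> (Phi \<circ> h) x = F x"
      using F_g[OF i] gh hi by (metis comp_apply image_subset_iff)
    ultimately show ?thesis using continuous_on_cong by blast
  qed
  then show ?thesis unfolding Eeq
    using arcs by (intro continuous_on_closed_Union) (auto simp: arc_imp_path closed_path_image)
qed

lemma F_onto: "F ` E = E"
proof
  show "F ` E \<subseteq> E"
  proof
    fix y assume "y \<in> F ` E"
    then obtain i t where "i < r" "t \<in> {0..1}" "y = F (g i t)"
      unfolding Eeq path_image_def by auto
    then show "y \<in> E" using F_g Phi_in by simp
  qed
  show "E \<subseteq> F ` E"
  proof
    fix y assume "y \<in> E"
    then obtain j t where j: "j < r" and t: "t \<in> {0..1}" and y: "y = g j t"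
      unfolding Eeq path_image_def by auto
    obtain k where k: "k < m" "L ! k = (j, True)" using Lall[OF j] by (auto simp: in_set_conv_nth m_def)
    have kM: "k < M" using k by (simp add: M_def)
    have x: "(real k + t) / real M \<in> {0..1}"
    proof -
      have "real k + t \<le> real M" using kM t by simp
      then show ?thesis using t M2 by (auto simp: field_simps)
    qed
    have "F (g 0 ((real k + t) / real M)) = y"
      using F_g[OF _ x] r1 markov[OF kM t] k y by (simp add: stp_def)
    moreover have "g 0 ((real k + t) / real M) \<in> E"
      using x r1 unfolding Eeq path_image_def by (auto intro!: bexI[of _ 0])
    ultimately show "y \<in> F ` E" by blast
  qed
qed

end

context fgw begin

lemma Mpos: "real M > 0" using M2 by simp

lemma resc: "(real (P * M + s) + u) / real M ^ Suc n = (real P + (real s + u) / real M) / real M ^ n"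
proof -
  have K: "real M ^ n > 0" using Mpos by simp
  show ?thesis using Mpos K by (simp add: field_simps)
qed

lemma unit_sub: "s < M \<Longrightarrow> u \<in> {0..1} \<Longrightarrow> (real s + u) / real M \<in> {0..1}"
proof -
  assume s: "s < M" and u: "u \<in> {0..1}"
  have "real s + 1 \<le> real M" using s by (metis Suc_leI of_nat_Suc of_nat_le_iff add.commute)
  then have "real s + u \<le> real M" using u by simp
  then show ?thesis using u Mpos by (simp add: field_simps)
qed

lemma step:
  assumes j': "j' < r"
    and H: "\<And>u. u \<in> {0..1} \<Longrightarrow> (F ^^ n) (g i ((real P + u) / real M ^ n)) = g j' (if b' then u else 1 - u)"
    and s: "s < M" and u: "u \<in> {0..1}"
  shows "(F ^^ Suc n) (g i ((real (P * M + s) + u) / real M ^ Suc n)) =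
     g (fst (L ! ((if b' then s else M - 1 - s) mod m)))
       (if snd (L ! ((if b' then s else M - 1 - s) mod m)) = b' then u else 1 - u)"
proof -
  define w where "w = (real s + u) / real M"
  have w: "w \<in> {0..1}" unfolding w_def by (rule unit_sub[OF s u])
  have ow: "(if b' then w else 1 - w) \<in> {0..1}" using w by auto
  have "(F ^^ Suc n) (g i ((real (P * M + s) + u) / real M ^ Suc n)) = F (g j' (if b' then w else 1 - w))"
    unfolding resc w_def[symmetric] using H[OF w] by simp
  also have "\<dots> = Phi (if b' then w else 1 - w)" using F_g[OF j' ow] .
  finally have eq: "(F ^^ Suc n) (g i ((real (P * M + s) + u) / real M ^ Suc n)) = Phi (if b' then w else 1 - w)" .
  show ?thesis
  proof (cases b')
    case True
    then show ?thesis using eq markov[OF s u] unfolding w_def by (simp add: stp_def)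
  next
    case False
    have s2: "M - 1 - s < M" using s by simp
    have u2: "1 - u \<in> {0..1}" using u by auto
    have "1 - w = (real (M - 1 - s) + (1 - u)) / real M"
      unfolding w_def using Mpos s by (simp add: field_simps of_nat_diff)
    then have "Phi (if b' then w else 1 - w) = stp g (L ! ((M - 1 - s) mod m)) (1 - u)"
      using markov[OF s2 u2] False by simp
    then show ?thesis using eq False by (cases "snd (L ! ((M - 1 - s) mod m))") (simp_all add: stp_def)
  qed
qed

lemma levels:
  "i < r \<Longrightarrow> P < M ^ n \<Longrightarrow> \<exists>j<r. \<exists>b. \<forall>u\<in>{0..1}.
      (F ^^ n) (g i ((real P + u) / real M ^ n)) = g j (if b then u else 1 - u)"
proof (induction n arbitrary: P)
  case 0
  then have "\<forall>u\<in>{0..1}. (F ^^ 0) (g i ((real P + u) / real M ^ 0)) = g i (if True then u else 1 - u)" by simp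
  then show ?case using 0 by blast
next
  case (Suc n P')
  define P where "P = P' div M"
  define s where "s = P' mod M"
  have P'eq: "P' = P * M + s" unfolding P_def s_def by simp
  have s: "s < M" unfolding s_def using M2 by simp
  have "P < M ^ n" unfolding P_def using Suc.prems(2) M2
    by (simp add: less_mult_imp_div_less mult.commute)
  then obtain j' b' where j': "j' < r" and H: "\<forall>u\<in>{0..1}.
      (F ^^ n) (g i ((real P + u) / real M ^ n)) = g j' (if b' then u else 1 - u)"
    using Suc.IH Suc.prems(1) by blast
  define k where "k = (if b' then s else M - 1 - s) mod m"
  have "k < m" unfolding k_def using m1 by simp
  then have jr: "fst (L ! k) < r" by (rule Lk)
  have "\<forall>u\<in>{0..1}. (F ^^ Suc n) (g i ((real P' + u) / real M ^ Suc n)) =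
      g (fst (L ! k)) (if (snd (L ! k) = b') then u else 1 - u)"
    unfolding P'eq k_def using step[OF j' H[rule_format] s] by blast
  then show ?case using jr by blast
qed

lemma mainlem:
  assumes i: "i < r" and j: "j < r" and cd: "0 \<le> c" "c < d" "d \<le> 1"
  shows "\<exists>n>0. \<exists>Q<M ^ n. \<exists>b. c \<le> real Q / real M ^ n \<and> (real Q + 1) / real M ^ n \<le> d \<and>
     (\<forall>u\<in>{0..1}. (F ^^ n) (g i ((real Q + u) / real M ^ n)) = g j (if b then u else 1 - u))"
proof -
  obtain n where n: "(1/2::real) ^ n < (d - c) / 2" using real_arch_pow_inv[of "(d - c) / 2" "1/2"] cd by auto
  define K where "K = real M ^ n"
  have K2: "(2::real) ^ n \<le> K" unfolding K_def using M2 by (simp add: power_mono)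
  have Kpos: "K > 0" using K2 by (smt (verit) zero_less_power)
  have "1 / K \<le> (1/2) ^ n" using K2 by (simp add: power_one_over frac_le)
  then have iK: "2 / K < d - c" using n by simp
  define P where "P = nat \<lceil>c * K\<rceil>"
  have rP: "real P = of_int \<lceil>c * K\<rceil>" unfolding P_def using cd Kpos by simp
  have P1: "c * K \<le> real P" "real P < c * K + 1" unfolding rP using ceiling_correct[of "c * K"] by linarith+
  have cP: "c \<le> real P / K" using P1 Kpos by (simp add: field_simps)
  have "real P + 1 < c * K + 2" using P1 by linarith
  then have "(real P + 1) / K < (c * K + 2) / K" using Kpos by (rule divide_strict_right_mono)
  moreover have "(c * K + 2) / K = c + 2 / K" using Kpos by (simp add: field_simps)
  ultimately have "(real P + 1) / K < c + 2 / K" by simp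
  then have dP: "(real P + 1) / K \<le> d" using iK by simp
  then have "real P + 1 \<le> K * d" using Kpos by (simp add: field_simps)
  moreover have "K * d \<le> K" using Kpos cd by (simp add: mult_left_le)
  ultimately have "real P + 1 \<le> K" by linarith
  then have "real (P + 1) \<le> real (M ^ n)" unfolding K_def by simp
  then have "P < M ^ n" by linarith
  then obtain j' b' where j': "j' < r" and H: "\<forall>u\<in>{0..1}.
      (F ^^ n) (g i ((real P + u) / real M ^ n)) = g j' (if b' then u else 1 - u)"
    using levels[OF i] by blast
  obtain k where k: "k < m" "L ! k = (j, True)" using Lall[OF j] by (auto simp: in_set_conv_nth m_def)
  define s where "s = (if b' then k else M - 1 - k)"
  have kM: "k < M" using k by (simp add: M_def)
  have s: "s < M" unfolding s_def using kM by simp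
  have sk: "(if b' then s else M - 1 - s) = k" unfolding s_def using kM by simp
  have map: "\<forall>u\<in>{0..1}. (F ^^ Suc n) (g i ((real (P * M + s) + u) / real M ^ Suc n)) = g j (if b' then u else 1 - u)"
  proof -
    have km: "k mod m = k" using k by simp
    have "\<forall>u\<in>{0..1}. (F ^^ Suc n) (g i ((real (P * M + s) + u) / real M ^ Suc n)) =
       g (fst (L ! k)) (if snd (L ! k) = b' then u else 1 - u)"
      using step[OF j' H[rule_format] s] unfolding sk km by blast
    then show ?thesis using k(2) by simp
  qed
  have lo: "c \<le> real (P * M + s) / real M ^ Suc n"
  proof -
    have "real (P * M + s) / real M ^ Suc n = (real P + (real s + 0) / real M) / K"
      using resc[of P s 0 n] unfolding K_def by simp
    also have "\<dots> \<ge> real P / K" using Kpos Mpos by (simp add: divide_right_mono)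
    finally show ?thesis using cP by simp
  qed
  have hi: "(real (P * M + s) + 1) / real M ^ Suc n \<le> d"
  proof -
    have "(real (P * M + s) + 1) / real M ^ Suc n = (real P + (real s + 1) / real M) / K"
      using resc[of P s 1 n] unfolding K_def by simp
    also have "\<dots> \<le> (real P + 1) / K" using Kpos unit_sub[OF s, of 1]
      by (intro divide_right_mono) auto
    finally show ?thesis using dP by simp
  qed
  have Q: "P * M + s < M ^ Suc n"
  proof -
    have "P * M + s < (P + 1) * M" using s by simp
    also have "\<dots> \<le> M ^ n * M" using \<open>P < M ^ n\<close> by (intro mult_right_mono) auto
    finally show ?thesis by (simp add: mult.commute)
  qed
  show ?thesis
    apply (rule exI[of _ "Suc n"])
    apply (rule conjI)
     apply simp
    apply (rule exI[of _ "P * M + s"])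
    apply (rule conjI[OF Q])
    apply (rule exI[of _ b'])
    using lo hi map by (intro conjI)
qed

end

context fgw begin

lemma E_param: "x \<in> E \<Longrightarrow> \<exists>i s. i < r \<and> s \<in> {0..1} \<and> x = g i s"
  unfolding Eeq path_image_def by blast

lemma g_in_E: "i < r \<Longrightarrow> s \<in> {0..1} \<Longrightarrow> g i s \<in> E"
  unfolding Eeq path_image_def by blast

lemma open_sub:
  assumes U: "openin (top_of_set E) U" and i: "i < r" and s: "s \<in> {0..1}" and x: "g i s \<in> U"
  shows "\<exists>c d. 0 \<le> c \<and> c < d \<and> d \<le> 1 \<and> g i ` {c..d} \<subseteq> U"
proof -
  obtain T where T: "open T" "U = E \<inter> T" using U unfolding openin_open by blast
  obtain e where e: "e > 0" "ball (g i s) e \<subseteq> T" using T x open_contains_ball by blast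
  have cg: "continuous_on {0..1} (g i)" using arc_imp_path[OF arcs[OF i]] unfolding path_def .
  obtain \<delta> where \<delta>: "\<delta> > 0" "\<And>t. t \<in> {0..1} \<Longrightarrow> dist t s < \<delta> \<Longrightarrow> dist (g i t) (g i s) < e"
    using cg s e(1) unfolding continuous_on_iff by blast
  define c where "c = max 0 (s - \<delta>/2)"
  define d where "d = min 1 (s + \<delta>/2)"
  have cd: "0 \<le> c" "c < d" "d \<le> 1" using s \<delta>(1) unfolding c_def d_def by auto
  have "g i t \<in> U" if t: "t \<in> {c..d}" for t
  proof -
    have t01: "t \<in> {0..1}" using t cd by auto
    have "dist t s < \<delta>" using t \<delta>(1) unfolding c_def d_def dist_real_def by auto
    then have "g i t \<in> ball (g i s) e" using \<delta>(2)[OF t01] by (simp add: dist_commute)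
    moreover have "g i t \<in> E" using t01 i by (rule g_in_E[rotated])
    ultimately show ?thesis using e T by auto
  qed
  then show ?thesis using cd by blast
qed


lemma open_sub':
  assumes U: "openin (top_of_set E) U" "U \<noteq> {}"
  shows "\<exists>i c d. i < r \<and> 0 \<le> c \<and> c < d \<and> d \<le> 1 \<and> g i ` {c..d} \<subseteq> U"
proof -
  obtain x where "x \<in> U" using U by auto
  moreover then have "x \<in> E" using openin_imp_subset[OF U(1)] by auto
  ultimately obtain i s where "i < r" "s \<in> {0..1}" "g i s \<in> U" using E_param by blast
  then show ?thesis using open_sub[OF U(1)] by blast
qed

lemma in_piece:
  assumes "u \<in> {0..1}" "c \<le> real Q / real M ^ n" "(real Q + 1) / real M ^ n \<le> d"
  shows "(real Q + u) / real M ^ n \<in> {c..d}"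
proof -
  have K: "real M ^ n > 0" using Mpos by simp
  have "real Q / real M ^ n \<le> (real Q + u) / real M ^ n"
    using assms(1) K by (intro divide_right_mono) auto
  moreover have "(real Q + u) / real M ^ n \<le> (real Q + 1) / real M ^ n"
    using assms(1) K by (intro divide_right_mono) auto
  ultimately show ?thesis using assms by auto
qed

lemma fixpt:
  fixes N Q :: real
  assumes N: "N > 1" and Q: "0 \<le> Q" "Q + 1 \<le> N"
  shows "\<exists>u\<in>{0..1}. (if b then u else 1 - u) = (Q + u) / N"
proof (cases b)
  case True
  define u where "u = Q / (N - 1)"
  have "u \<in> {0..1}" unfolding u_def using N Q by (auto simp: field_simps)
  moreover have "u = (Q + u) / N" unfolding u_def using N by (simp add: field_simps)
  ultimately show ?thesis using True by auto
next
  case False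
  define u where "u = (N - Q) / (N + 1)"
  have u01: "u \<in> {0..1}" unfolding u_def using N Q by (auto simp: field_simps)
  have e1: "1 - u = (Q + 1) / (N + 1)" unfolding u_def using N by (simp add: field_simps)
  have e2: "Q + u = N * (Q + 1) / (N + 1)" unfolding u_def using N by (simp add: field_simps)
  have "1 - u = (Q + u) / N" unfolding e1 e2 using N by simp
  then show ?thesis using False u01 by auto
qed

lemma periodic: "periodic_points_dense_on E F"
  unfolding periodic_points_dense_on_def
proof
  fix x assume xE: "x \<in> E"
  show "x \<in> closure {x \<in> E. \<exists>n>0. (F ^^ n) x = x}"
    unfolding closure_approachable
  proof (intro allI impI)
    fix e :: real assume e: "e > 0"
    obtain i s where iis: "i < r" "s \<in> {0..1}" "x = g i s" using E_param[OF xE] by blast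
    have U: "openin (top_of_set E) (E \<inter> ball x e)" by (intro openin_open_Int) simp
    have "g i s \<in> E \<inter> ball x e" using xE e iis by simp
    then obtain c d where cd: "0 \<le> c" "c < d" "d \<le> 1" "g i ` {c..d} \<subseteq> E \<inter> ball x e"
      using open_sub[OF U iis(1,2)] by blast
    obtain n Q b where n: "n > 0" "Q < M ^ n" "c \<le> real Q / real M ^ n" "(real Q + 1) / real M ^ n \<le> d"
      and map: "\<forall>u\<in>{0..1}. (F ^^ n) (g i ((real Q + u) / real M ^ n)) = g i (if b then u else 1 - u)"
      using mainlem[OF iis(1) iis(1) cd(1-3)] by blast
    have N1: "real M ^ n > 1" using M2 n(1) by (simp add: one_less_power)
    have "real Q + 1 \<le> real M ^ n" using n(2)
      by (metis Suc_leI of_nat_Suc of_nat_le_iff of_nat_power add.commute)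
    then obtain u where u: "u \<in> {0..1}" "(if b then u else 1 - u) = (real Q + u) / real M ^ n"
      using fixpt[OF N1, of "real Q" b] by auto
    define t where "t = (real Q + u) / real M ^ n"
    have t: "t \<in> {c..d}" unfolding t_def by (rule in_piece[OF u(1) n(3,4)])
    have fx: "(F ^^ n) (g i t) = g i t" using map u unfolding t_def by simp
    have "g i t \<in> E \<inter> ball x e" using cd(4) imageI[OF t, of "g i"] by blast
    then show "\<exists>y\<in>{x \<in> E. \<exists>n>0. (F ^^ n) x = x}. dist y x < e"
      using fx n(1) by (intro bexI[of _ "g i t"]) (auto simp: dist_commute)
  qed
qed

lemma transitive: "topologically_transitive_on E F"
  unfolding topologically_transitive_on_def
proof (intro allI impI)
  fix U V assume H: "openin (top_of_set E) U \<and> openin (top_of_set E) V \<and> U \<noteq> {} \<and> V \<noteq> {}"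
  obtain i c d where cd: "i < r" "0 \<le> c" "c < d" "d \<le> 1" "g i ` {c..d} \<subseteq> U"
    using open_sub'[of U] H by blast
  obtain y where y: "y \<in> V" using H by auto
  then have "y \<in> E" using openin_imp_subset[of euclidean E V] H by auto
  then obtain j s where js: "j < r" "s \<in> {0..1}" "y = g j s" using E_param by blast
  obtain n Q b where n: "n > 0" "Q < M ^ n" "c \<le> real Q / real M ^ n" "(real Q + 1) / real M ^ n \<le> d"
    and map: "\<forall>u\<in>{0..1}. (F ^^ n) (g i ((real Q + u) / real M ^ n)) = g j (if b then u else 1 - u)"
    using mainlem[OF cd(1) js(1) cd(2-4)] by blast
  define u where "u = (if b then s else 1 - s)"
  have u: "u \<in> {0..1}" using js(2) unfolding u_def by auto
  have "(F ^^ n) (g i ((real Q + u) / real M ^ n)) = y" using map u js unfolding u_def by auto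
  moreover have "g i ((real Q + u) / real M ^ n) \<in> U" using cd(5) in_piece[OF u n(3,4)] by auto
  ultimately show "\<exists>n>0. (F ^^ n) ` U \<inter> V \<noteq> {}" using n(1) y by blast
qed

lemma sensitive: "sensitive_on E F"
  unfolding sensitive_on_def
proof -
  define \<eta> where "\<eta> = dist (g 0 0) (g 0 1) / 3"
  have "g 0 0 \<noteq> g 0 1" using g_inj[of 0 0 1] r1 by auto
  then have \<eta>: "\<eta> > 0" unfolding \<eta>_def by simp
  have "\<forall>x\<in>E. \<forall>N. N \<subseteq> E \<and> x \<in> N \<and> (\<exists>U. openin (top_of_set E) U \<and> x \<in> U \<and> U \<subseteq> N) \<longrightarrow>
       (\<exists>y\<in>N. \<exists>n. dist ((F ^^ n) x) ((F ^^ n) y) > \<eta>)"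
  proof (intro ballI allI impI)
    fix x N assume xE: "x \<in> E" and H: "N \<subseteq> E \<and> x \<in> N \<and> (\<exists>U. openin (top_of_set E) U \<and> x \<in> U \<and> U \<subseteq> N)"
    then obtain U where U: "openin (top_of_set E) U" "x \<in> U" "U \<subseteq> N" by blast
    obtain i c d where cd: "i < r" "0 \<le> c" "c < d" "d \<le> 1" "g i ` {c..d} \<subseteq> U"
      using open_sub'[OF U(1)] U(2) by blast
    obtain n Q b where n: "n > 0" "Q < M ^ n" "c \<le> real Q / real M ^ n" "(real Q + 1) / real M ^ n \<le> d"
      and map: "\<forall>u\<in>{0..1}. (F ^^ n) (g i ((real Q + u) / real M ^ n)) = g 0 (if b then u else 1 - u)"
      using mainlem[OF cd(1) _ cd(2-4), of 0] r1 by auto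
    define u1 where "u1 = (if b then 0 else 1::real)"
    define u2 where "u2 = (if b then 1 else 0::real)"
    have u: "u1 \<in> {0..1}" "u2 \<in> {0..1}" unfolding u1_def u2_def by auto
    define y1 where "y1 = g i ((real Q + u1) / real M ^ n)"
    define y2 where "y2 = g i ((real Q + u2) / real M ^ n)"
    have y1: "(F ^^ n) y1 = g 0 0" unfolding y1_def using map u(1) by (auto simp: u1_def)
    have y2: "(F ^^ n) y2 = g 0 1" unfolding y2_def using map u(2) by (auto simp: u2_def)
    have yN: "y1 \<in> N" "y2 \<in> N" unfolding y1_def y2_def
      using imageI[OF in_piece[OF u(1) n(3,4)], of "g i"] imageI[OF in_piece[OF u(2) n(3,4)], of "g i"]
        cd(5) U(3) by blast+
    have "dist (g 0 0) (g 0 1) \<le> dist ((F ^^ n) x) (g 0 0) + dist ((F ^^ n) x) (g 0 1)"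
      by (simp add: dist_triangle3)
    then have "dist ((F ^^ n) x) ((F ^^ n) y1) > \<eta> \<or> dist ((F ^^ n) x) ((F ^^ n) y2) > \<eta>"
      unfolding y1 y2 \<eta>_def using \<eta> \<eta>_def by linarith
    then show "\<exists>y\<in>N. \<exists>n. dist ((F ^^ n) x) ((F ^^ n) y) > \<eta>" using yN by blast
  qed
  then show "\<exists>\<eta>>0. \<forall>x\<in>E. \<forall>N. N \<subseteq> E \<and> x \<in> N \<and> (\<exists>U. openin (top_of_set E) U \<and> x \<in> U \<and> U \<subseteq> N) \<longrightarrow>
       (\<exists>y\<in>N. \<exists>n. dist ((F ^^ n) x) ((F ^^ n) y) > \<eta>)" using \<eta> by blast
qed

end

lemma grid:
  fixes c d :: real
  assumes cd: "0 \<le> c" "c < d" "d \<le> 1"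
  shows "\<exists>k a. a + 1 \<le> (2::nat) ^ k \<and> c \<le> real a / 2 ^ k \<and> (real a + 1) / 2 ^ k \<le> d"
proof -
  obtain n where n: "(1/2::real) ^ n < (d - c) / 2" using real_arch_pow_inv[of "(d - c) / 2" "1/2"] cd by auto
  define K where "K = (2::real) ^ n"
  have Kpos: "K > 0" unfolding K_def by simp
  have "1 / K = (1/2) ^ n" unfolding K_def by (simp add: power_one_over)
  then have iK: "2 / K < d - c" using n by simp
  define P where "P = nat \<lceil>c * K\<rceil>"
  have rP: "real P = of_int \<lceil>c * K\<rceil>" unfolding P_def using cd Kpos by simp
  have P1: "c * K \<le> real P" "real P < c * K + 1" unfolding rP using ceiling_correct[of "c * K"] by linarith+
  have cP: "c \<le> real P / K" using P1 Kpos by (simp add: field_simps)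
  have "real P + 1 < c * K + 2" using P1 by linarith
  then have "(real P + 1) / K < (c * K + 2) / K" using Kpos by (rule divide_strict_right_mono)
  moreover have "(c * K + 2) / K = c + 2 / K" using Kpos by (simp add: field_simps)
  ultimately have "(real P + 1) / K < c + 2 / K" by simp
  then have dP: "(real P + 1) / K \<le> d" using iK by simp
  then have "real P + 1 \<le> K * d" using Kpos by (simp add: field_simps)
  moreover have "K * d \<le> K" using Kpos cd by (simp add: mult_left_le)
  ultimately have "real P + 1 \<le> K" by linarith
  then have "real (P + 1) \<le> real ((2::nat) ^ n)" unfolding K_def by simp
  then have "P + 1 \<le> 2 ^ n" by linarith
  then show ?thesis using cP dP unfolding K_def by blast
qed

context fgw begin

definition "tj q = fst (prod_decode q)"
definition "tk q = fst (prod_decode (snd (prod_decode q)))"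
definition "ta q = snd (prod_decode (snd (prod_decode q)))"
definition "valid q \<longleftrightarrow> tj q < r \<and> ta q + 1 \<le> (2::nat) ^ tk q"
definition "al q = real (ta q) / 2 ^ tk q"
definition "be q = (real (ta q) + 1) / 2 ^ tk q"
definition "Tg q = g (tj q) ` {al q .. be q}"

lemma valid_bounds: "valid q \<Longrightarrow> 0 \<le> al q \<and> al q < be q \<and> be q \<le> 1"
proof -
  assume v: "valid q"
  have "real (ta q) + 1 \<le> 2 ^ tk q" using v unfolding valid_def
    by (metis of_nat_1 of_nat_add of_nat_le_iff of_nat_numeral of_nat_power)
  then show ?thesis unfolding al_def be_def by (simp add: divide_strict_right_mono field_simps)
qed

lemma targ:
  assumes V: "openin (top_of_set E) V" "V \<noteq> {}"
  shows "\<exists>q. valid q \<and> Tg q \<subseteq> V"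
proof -
  obtain i c d where cd: "i < r" "0 \<le> c" "c < d" "d \<le> 1" "g i ` {c..d} \<subseteq> V"
    using open_sub'[OF V] by blast
  obtain k a where ka: "a + 1 \<le> (2::nat) ^ k" "c \<le> real a / 2 ^ k" "(real a + 1) / 2 ^ k \<le> d"
    using grid[OF cd(2-4)] by blast
  define q where "q = prod_encode (i, prod_encode (k, a))"
  have q: "tj q = i" "tk q = k" "ta q = a" unfolding q_def tj_def tk_def ta_def by simp_all
  have "valid q" unfolding valid_def q using cd ka by simp
  moreover have "{al q .. be q} \<subseteq> {c..d}" unfolding al_def be_def q using ka by auto
  then have "Tg q \<subseteq> V" unfolding Tg_def q using cd(5) by blast
  ultimately show ?thesis by blast
qed

definition "goodstep q c d c' d' \<longleftrightarrow> c \<le> c' \<and> c' < d' \<and> d' \<le> d \<and>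
   (valid q \<longrightarrow> (\<exists>n. \<forall>t\<in>{c'..d'}. (F ^^ n) (g 0 t) \<in> Tg q))"

lemma exstep:
  assumes cd: "0 \<le> c" "c < d" "d \<le> 1"
  shows "\<exists>c' d'. goodstep q c d c' d'"
proof (cases "valid q")
  case False
  then show ?thesis using cd unfolding goodstep_def by blast
next
  case True
  have j: "tj q < r" using True valid_def by simp
  have ab: "0 \<le> al q" "al q < be q" "be q \<le> 1" using valid_bounds[OF True] by auto
  obtain n Q b where n: "n > 0" "Q < M ^ n" "c \<le> real Q / real M ^ n" "(real Q + 1) / real M ^ n \<le> d"
    and map: "\<forall>u\<in>{0..1}. (F ^^ n) (g 0 ((real Q + u) / real M ^ n)) = g (tj q) (if b then u else 1 - u)"
    using mainlem[OF _ j cd, of 0] r1 by auto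
  define a' where "a' = (if b then al q else 1 - be q)"
  define b' where "b' = (if b then be q else 1 - al q)"
  have ab': "0 \<le> a'" "a' < b'" "b' \<le> 1" unfolding a'_def b'_def using ab by auto
  define N where "N = real M ^ n"
  have N: "N > 0" unfolding N_def using Mpos by simp
  define c' where "c' = (real Q + a') / N"
  define d' where "d' = (real Q + b') / N"
  have "c \<le> c'" using in_piece[of a' c Q n d] n ab' unfolding c'_def N_def by auto
  moreover have "d' \<le> d" using in_piece[of b' c Q n d] n ab' unfolding d'_def N_def by auto
  moreover have "c' < d'" unfolding c'_def d'_def using N ab' by (simp add: divide_strict_right_mono)
  moreover have "(F ^^ n) (g 0 t) \<in> Tg q" if t: "t \<in> {c'..d'}" for t
  proof -
    define u where "u = N * t - real Q"
    have tu: "t = (real Q + u) / N" unfolding u_def using N by simp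
    have u: "u \<in> {a'..b'}" using t N unfolding u_def c'_def d'_def by (auto simp: field_simps)
    then have u01: "u \<in> {0..1}" using ab' by auto
    have "(if b then u else 1 - u) \<in> {al q .. be q}" using u unfolding a'_def b'_def by (cases b) auto
    then show ?thesis using map u01 unfolding tu N_def Tg_def by auto
  qed
  ultimately show ?thesis unfolding goodstep_def by blast
qed

lemma dense_orbit: "has_dense_orbit_on E F"
proof -
  define nx where "nx q cd = (SOME cd'. goodstep q (fst cd) (snd cd) (fst cd') (snd cd'))" for q cd
  define sq where "sq = rec_nat (0::real, 1::real) nx"
  have sq0: "sq 0 = (0, 1)" and sqS: "\<And>q. sq (Suc q) = nx q (sq q)" unfolding sq_def by simp_all
  define cs where "cs q = fst (sq q)" for q
  define ds where "ds q = snd (sq q)" for q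
  have inv: "0 \<le> cs q \<and> cs q < ds q \<and> ds q \<le> 1 \<and> goodstep q (cs q) (ds q) (cs (Suc q)) (ds (Suc q))" for q
  proof (induction q)
    case 0
    obtain a b where "goodstep 0 0 1 a b" using exstep[of 0 1 0] by auto
    then have ex: "\<exists>cd'. goodstep 0 0 1 (fst cd') (snd cd')" by (intro exI[of _ "(a, b)"]) simp
    have "goodstep 0 0 1 (fst (nx 0 (sq 0))) (snd (nx 0 (sq 0)))"
      using someI_ex[OF ex] unfolding nx_def sq0 by simp
    then have "goodstep 0 0 1 (cs 1) (ds 1)" unfolding cs_def ds_def using sqS[of 0] by simp
    then show ?case unfolding cs_def ds_def sq0 by simp
  next
    case (Suc q)
    then have b: "0 \<le> cs (Suc q)" "cs (Suc q) < ds (Suc q)" "ds (Suc q) \<le> 1" unfolding goodstep_def by auto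
    obtain a b' where "goodstep (Suc q) (cs (Suc q)) (ds (Suc q)) a b'" using exstep[OF b, of "Suc q"] by auto
    then have ex: "\<exists>cd'. goodstep (Suc q) (fst (sq (Suc q))) (snd (sq (Suc q))) (fst cd') (snd cd')"
      unfolding cs_def ds_def by (intro exI[of _ "(a, b')"]) simp
    have "goodstep (Suc q) (fst (sq (Suc q))) (snd (sq (Suc q))) (fst (nx (Suc q) (sq (Suc q)))) (snd (nx (Suc q) (sq (Suc q))))"
      using someI_ex[OF ex] unfolding nx_def by simp
    then have "goodstep (Suc q) (cs (Suc q)) (ds (Suc q)) (cs (Suc (Suc q))) (ds (Suc (Suc q)))"
      unfolding cs_def ds_def using sqS[of "Suc q"] by simp
    then show ?case using b by simp
  qed
  have inc: "incseq cs" by (rule incseq_SucI) (use inv in \<open>auto simp: goodstep_def\<close>)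
  have dec: "decseq ds" by (rule decseq_SucI) (use inv in \<open>auto simp: goodstep_def\<close>)
  have cd_le: "cs p \<le> ds q" for p q
  proof -
    have "cs p \<le> cs (max p q)" using inc by (simp add: incseq_def)
    also have "\<dots> \<le> ds (max p q)" using inv less_imp_le by blast
    also have "\<dots> \<le> ds q" using dec by (simp add: decseq_def)
    finally show ?thesis .
  qed
  define ts where "ts = Sup (range cs)"
  have bdd: "bdd_above (range cs)" using inv by (intro bdd_aboveI[of _ 1]) (auto intro: less_imp_le order_trans)
  have ts: "cs q \<le> ts \<and> ts \<le> ds q" for q
    unfolding ts_def using cSup_upper[OF _ bdd] cSUP_least cd_le by (metis UNIV_I UNIV_not_empty image_eqI)
  have ts01: "ts \<in> {0..1}" using ts[of 0] inv[of 0] by auto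
  define x where "x = g 0 ts"
  have xE: "x \<in> E" unfolding x_def using g_in_E[OF _ ts01] r1 by simp
  have hit: "\<exists>n. (F ^^ n) x \<in> Tg q" if v: "valid q" for q
  proof -
    obtain n where "\<forall>t\<in>{cs (Suc q)..ds (Suc q)}. (F ^^ n) (g 0 t) \<in> Tg q"
      using inv[of q] v unfolding goodstep_def by blast
    then show ?thesis using ts[of "Suc q"] unfolding x_def by auto
  qed
  have "E \<subseteq> closure (range (\<lambda>n. (F ^^ n) x))"
  proof
    fix y assume yE: "y \<in> E"
    show "y \<in> closure (range (\<lambda>n. (F ^^ n) x))" unfolding closure_approachable
    proof (intro allI impI)
      fix e :: real assume e: "e > 0"
      have V: "openin (top_of_set E) (E \<inter> ball y e)" "E \<inter> ball y e \<noteq> {}"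
        using yE e by (auto intro!: openin_open_Int)
      obtain q where q: "valid q" "Tg q \<subseteq> E \<inter> ball y e" using targ[OF V] by blast
      obtain n where "(F ^^ n) x \<in> Tg q" using hit[OF q(1)] by blast
      then have "dist ((F ^^ n) x) y < e" using q(2) by (auto simp: dist_commute)
      then show "\<exists>z\<in>range (\<lambda>n. (F ^^ n) x). dist z y < e" by blast
    qed
  qed
  then show ?thesis unfolding has_dense_orbit_on_def using xE by blast
qed

end

theorem mainTheorem10:
  fixes E :: "'a::metric_space set"
  assumes "finite_graph E"
  shows "\<exists>F. continuous_on E F \<and> F ` E = E \<and> topologically_transitive_on E F \<and>
             has_dense_orbit_on E F \<and> periodic_points_dense_on E F \<and> chaotic_on E F"
proof -
  from assms obtain r and g :: "nat \<Rightarrow> real \<Rightarrow> 'a" where H: "connected E" "r \<ge> 1" "\<forall>i<r. arc (g i)"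
    "E = (\<Union>i<r. path_image (g i))"
    "\<forall>i<r. \<forall>j<r. i \<noteq> j \<longrightarrow> path_image (g i) \<inter> path_image (g j)
        \<subseteq> {pathstart (g i), pathfinish (g i)} \<inter> {pathstart (g j), pathfinish (g j)}"
    unfolding finite_graph_def by blast
  interpret fg E r g
    using H by unfold_locales blast+
  obtain L where L: "walk g r (g 0 0) L (g 0 0)" "L \<noteq> []" "\<And>j. j < r \<Longrightarrow> (j, True) \<in> set L"
    using exists_walk by blast
  interpret W: fgw E r g L
    using L by unfold_locales blast+
  show ?thesis using W.cont_F W.F_onto W.transitive W.dense_orbit W.periodic W.sensitive
    unfolding chaotic_on_def by blast
qed

end
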